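(* Let $a,b\in\mathbb{R}$, let $w(x)=ax+b$, and let $\mathcal{I}\subset\mathbb{R}$ be the set of points where $w>0$. For $\sigma>0$ and $x,y\in\mathbb{R}$ with $w(y)\neq 0$ define the one-step transition density $$p_1(x\mid y,\sigma,a,b)=\frac{k_\sigma(x;y)\,w(x)}{\int_{\mathbb{R}}k_\sigma(z;y)\,w(z)\,\mathrm{d}z},$$ where $k_\sigma(\cdot;y)$ is the Gaussian density with mean $y$ and standard deviation $\sigma$, and for $n\in\mathbb{N}$ define the $n$-step density by the Chapman–Kolmogorov formula $$p_n(x_n\mid x_0,\sigma,a,b)=\int_{\mathbb{R}^{n-1}}\prod_{k=1}^{n}p_1(x_k\mid x_{k-1},\sigma,a,b)\,\mathrm{d}x_1\cdots\mathrm{d}x_{n-1}.$$ Then, restricted to the domain $\mathcal{I}$, the movement model is robust of degree $n$ for every $n\in\mathbb{N}$ with parameter transformation $g_n(\sigma,a,b)=(\sqrt{n}\,\sigma,a,b)$; that is, for every $n\in\mathbb{N}$, every $\sigma>0$ and all $x,y\in\mathcal{I}$, $$p_n(x\mid y,\sigma,a,b)=p_1(x\mid y,\sqrt{n}\,\sigma,a,b).$$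
   Context: This concerns a one-dimensional discrete-time Markov movement model (locations $X_t\in\mathbb{R}$ at times $0,\tau,2\tau,\dots$) whose one-step transition density is a Gaussian movement kernel multiplied by a spatial weighting function $w$ and renormalized, as written in the claim. A model with one-step density $p_1(\cdot\mid\cdot,\bm\theta)$ and $n$-step density $p_n$ is called robust of degree $n$ if there is an injective map $g_n$ on the parameter space with $p_n(x\mid y,\bm\theta)=p_1(x\mid y,g_n(\bm\theta))$ for all $x,y$ (here for all $x,y$ in the restricted domain). *)

theory Defs
  imports "HOL-Probability.Probability"
begin

definition wlin :: "real \<Rightarrow> real \<Rightarrow> real \<Rightarrow> real" where
  "wlin a b x = a * x + b"

definition dom_I :: "real \<Rightarrow> real \<Rightarrow> real set" where
  "dom_I a b = {x. wlin a b x > 0}"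

definition kern :: "real \<Rightarrow> real \<Rightarrow> real \<Rightarrow> real" where
  "kern \<sigma> x y = normal_density y \<sigma> x"

definition p1 :: "real \<Rightarrow> real \<Rightarrow> real \<Rightarrow> real \<Rightarrow> real \<Rightarrow> real" where
  "p1 x y \<sigma> a b =
     kern \<sigma> x y * wlin a b x / (\<integral>z. kern \<sigma> z y * wlin a b z \<partial>lborel)"

text \<open>n-step density via Chapman-Kolmogorov: integral over (x_1,...,x_{n-1}) in R^{n-1}
  (product Lebesgue measure on the index set {1..<n}), with x_0 = y and x_n = x.\<close>
definition pn :: "nat \<Rightarrow> real \<Rightarrow> real \<Rightarrow> real \<Rightarrow> real \<Rightarrow> real \<Rightarrow> real" where
  "pn n x y \<sigma> a b =
     (\<integral>xs. (let xx = (\<lambda>k. if k = 0 then y else if k = n then x else xs k)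
             in \<Prod>k\<in>{1..n}. p1 (xx k) (xx (k - 1)) \<sigma> a b)
        \<partial>(PiM {1..<n} (\<lambda>_. lborel)))"

end

theory Submission
  imports Defs
begin

lemma int_nd_lin:
  assumes "\<sigma> > 0"
  shows "(\<integral>z. normal_density y \<sigma> z * (a * z + b) \<partial>lborel) = a * y + b"
proof -
  have i1: "integrable lborel (\<lambda>z. normal_density y \<sigma> z * z)"
    using integrable_normal_moment_nz_1[OF assms] .
  have "(\<integral>z. normal_density y \<sigma> z * (a * z + b) \<partial>lborel)
      = (\<integral>z. a * (normal_density y \<sigma> z * z) + b * normal_density y \<sigma> z \<partial>lborel)"
    by (rule Bochner_Integration.integral_cong) (auto simp: algebra_simps)
  also have "\<dots> = a * (\<integral>z. normal_density y \<sigma> z * z \<partial>lborel) + b * (\<integral>z. normal_density y \<sigma> z \<partial>lborel)"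
    using i1 by (subst Bochner_Integration.integral_add) (auto simp: integral_mult_right_zero integrable_normal_density[OF assms])
  also have "\<dots> = a * y + b"
    using integral_normal_moment_nz_1[OF assms] integral_normal_density[OF assms] by simp
  finally show ?thesis .
qed

lemma p1_eq:
  assumes "\<sigma> > 0"
  shows "p1 u v \<sigma> a b = kern \<sigma> u v * wlin a b u / wlin a b v"
  unfolding p1_def kern_def wlin_def using int_nd_lin[OF assms] by simp

lemma prod_telescope:
  fixes f :: "nat \<Rightarrow> real"
  assumes "\<And>j. j \<le> n \<Longrightarrow> f j \<noteq> 0"
  shows "(\<Prod>k\<in>{1..n}. f k / f (k - 1)) = f n / f 0"
  using assms
proof (induction n)
  case 0 then show ?case by simp
next
  case (Suc n)
  have "{1..Suc n} = insert (Suc n) {1..n}" by auto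
  then have "(\<Prod>k\<in>{1..Suc n}. f k / f (k - 1)) = f (Suc n) / f n * (\<Prod>k\<in>{1..n}. f k / f (k - 1))"
    by simp
  also have "\<dots> = f (Suc n) / f n * (f n / f 0)" using Suc by simp
  also have "\<dots> = f (Suc n) / f 0" using Suc.prems[of n] by simp
  finally show ?case .
qed

definition xxf :: "nat \<Rightarrow> real \<Rightarrow> real \<Rightarrow> (nat \<Rightarrow> real) \<Rightarrow> nat \<Rightarrow> real" where
  "xxf n x y xs k = (if k = 0 then y else if k = n then x else xs k)"

lemma xxf_meas:
  assumes "k \<le> n"
  shows "(\<lambda>xs. xxf n x y xs k) \<in> borel_measurable (PiM {1..<n} (\<lambda>_. lborel))"
proof (cases "k = 0 \<or> k = n")
  case True then show ?thesis unfolding xxf_def by (cases "k = 0") auto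
next
  case False
  then have "k \<in> {1..<n}" using assms by auto
  then have "(\<lambda>xs. xs k) \<in> borel_measurable (PiM {1..<n} (\<lambda>_. lborel))" by measurable
  then show ?thesis using False unfolding xxf_def by simp
qed

definition Q :: "real \<Rightarrow> nat \<Rightarrow> real \<Rightarrow> real \<Rightarrow> (nat \<Rightarrow> real) \<Rightarrow> real" where
  "Q \<sigma> n x y xs = (\<Prod>k\<in>{1..n}. kern \<sigma> (xxf n x y xs k) (xxf n x y xs (k - 1)))"

lemma Q_meas:
  "(\<lambda>xs. Q \<sigma> n x y xs) \<in> borel_measurable (PiM {1..<n} (\<lambda>_. lborel))"
  unfolding Q_def
proof (rule borel_measurable_prod)
  fix k assume k: "k \<in> {1..n}"
  note m1 = xxf_meas[of k n x y] and m2 = xxf_meas[of "k-1" n x y]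
  have [measurable]: "(\<lambda>xs. xxf n x y xs k) \<in> borel_measurable (PiM {1..<n} (\<lambda>_. lborel))"
     "(\<lambda>xs. xxf n x y xs (k-1)) \<in> borel_measurable (PiM {1..<n} (\<lambda>_. lborel))"
    using m1 m2 k by auto
  show "(\<lambda>xs. kern \<sigma> (xxf n x y xs k) (xxf n x y xs (k - 1))) \<in> borel_measurable (PiM {1..<n} (\<lambda>_. lborel))"
    unfolding kern_def normal_density_def by measurable
qed

lemma Q_nonneg: "Q \<sigma> n x y xs \<ge> 0"
  unfolding Q_def kern_def by (simp add: prod_nonneg)


interpretation PSF: product_sigma_finite "\<lambda>_::nat. lborel::real measure"
  by unfold_locales

lemma AE_coord:
  assumes "finite I" "k \<in> I"
  shows "AE xs in PiM I (\<lambda>_::nat. lborel::real measure). xs k \<noteq> c"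
proof -
  define J where "J = I - {k}"
  have IJ: "I = insert k J" "k \<notin> J" "finite J" using assms unfolding J_def by auto
  have meas: "(\<lambda>xs. indicator {c} (xs k) :: ennreal) \<in> borel_measurable (PiM I (\<lambda>_::nat. lborel::real measure))"
    using assms(2) by measurable
  have "(\<integral>\<^sup>+ xs. indicator {c} (xs k) \<partial>PiM (insert k J) (\<lambda>_::nat. lborel::real measure))
      = (\<integral>\<^sup>+ x. (\<integral>\<^sup>+ y. indicator {c} ((x(k := y)) k) \<partial>lborel) \<partial>PiM J (\<lambda>_. lborel))"
    using meas IJ by (subst PSF.product_nn_integral_insert) auto
  also have "\<dots> = 0" by simp
  finally have "(\<integral>\<^sup>+ xs. indicator {c} (xs k) \<partial>PiM I (\<lambda>_::nat. lborel::real measure)) = 0"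
    using IJ by simp
  then have "AE xs in PiM I (\<lambda>_::nat. lborel::real measure). (indicator {c} (xs k) :: ennreal) = 0"
    using nn_integral_0_iff_AE[OF meas] by simp
  then show ?thesis by eventually_elim (auto split: split_indicator)
qed

lemma Q_base: "Q \<sigma> 1 x y xs = normal_density y \<sigma> x"
  unfolding Q_def xxf_def kern_def by simp

lemma Q_step:
  assumes "n \<ge> 1"
  shows "Q \<sigma> (Suc n) x y (xs(n := t)) = Q \<sigma> n t y xs * normal_density t \<sigma> x"
proof -
  have "{1..Suc n} = insert (Suc n) {1..n}" by auto
  then have "Q \<sigma> (Suc n) x y (xs(n := t)) = kern \<sigma> x t *
     (\<Prod>k\<in>{1..n}. kern \<sigma> (xxf (Suc n) x y (xs(n := t)) k) (xxf (Suc n) x y (xs(n := t)) (k - 1)))"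
    unfolding Q_def using assms by (simp add: xxf_def)
  also have "(\<Prod>k\<in>{1..n}. kern \<sigma> (xxf (Suc n) x y (xs(n := t)) k) (xxf (Suc n) x y (xs(n := t)) (k - 1)))
     = Q \<sigma> n t y xs"
    unfolding Q_def by (rule prod.cong) (auto simp: xxf_def)
  finally show ?thesis by (metis kern_def mult.commute)
qed


lemma nd_shift: "normal_density \<mu> s v = normal_density 0 s (v - \<mu>)"
  unfolding normal_density_def by simp

lemma conv_nd:
  assumes "s > 0" "\<sigma> > 0"
  shows "(\<integral>\<^sup>+ t. ennreal (normal_density y s t * normal_density t \<sigma> x) \<partial>lborel)
       = ennreal (normal_density y (sqrt (\<sigma>\<^sup>2 + s\<^sup>2)) x)"
proof -
  have "(\<integral>\<^sup>+ t. ennreal (normal_density y s t * normal_density t \<sigma> x) \<partial>lborel)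
      = ennreal \<bar>1\<bar> * (\<integral>\<^sup>+ u. ennreal (normal_density y s (y + 1 * u) * normal_density (y + 1 * u) \<sigma> x) \<partial>lborel)"
    by (rule nn_integral_real_affine) (auto simp: normal_density_def)
  also have "\<dots> = (\<integral>\<^sup>+ u. ennreal (normal_density 0 \<sigma> ((x - y) - u) * normal_density 0 s u) \<partial>lborel)"
  proof -
    have e1: "\<And>u. normal_density y s (y + u) = normal_density 0 s u"
      and e2: "\<And>u. normal_density (y + u) \<sigma> x = normal_density 0 \<sigma> ((x - y) - u)"
      unfolding normal_density_def by (auto simp: algebra_simps)
    show ?thesis by (simp add: e1 e2 mult.commute)
  qed
  also have "\<dots> = ennreal (normal_density 0 (sqrt (\<sigma>\<^sup>2 + s\<^sup>2)) (x - y))"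
    using fun_cong[OF conv_normal_density_zero_mean[OF assms(2,1)], of "x - y"] by simp
  also have "\<dots> = ennreal (normal_density y (sqrt (\<sigma>\<^sup>2 + s\<^sup>2)) x)"
    by (simp add: nd_shift[of y])
  finally show ?thesis .
qed

lemma Q_nn:
  assumes "\<sigma> > 0" "n \<ge> 1"
  shows "(\<integral>\<^sup>+ xs. ennreal (Q \<sigma> n x y xs) \<partial>PiM {1..<n} (\<lambda>_. lborel))
       = ennreal (normal_density y (sqrt (real n) * \<sigma>) x)"
  using assms(2)
proof (induction n arbitrary: x rule: nat_induct_at_least)
  case base
  then show ?case by (simp add: PiM_empty Q_base[unfolded One_nat_def])
next
  case (Suc n)
  have ins: "{1..<Suc n} = insert n {1..<n}" using Suc.hyps by auto
  have m: "(\<lambda>xs. ennreal (Q \<sigma> (Suc n) x y xs)) \<in> borel_measurable (PiM (insert n {1..<n}) (\<lambda>_::nat. lborel::real measure))"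
    using Q_meas[of \<sigma> "Suc n" x y] ins by simp
  have "(\<integral>\<^sup>+ xs. ennreal (Q \<sigma> (Suc n) x y xs) \<partial>PiM {1..<Suc n} (\<lambda>_. lborel))
      = (\<integral>\<^sup>+ t. (\<integral>\<^sup>+ xs. ennreal (Q \<sigma> (Suc n) x y (xs(n := t))) \<partial>PiM {1..<n} (\<lambda>_. lborel)) \<partial>lborel)"
    unfolding ins by (rule PSF.product_nn_integral_insert_rev) (use m in auto)
  also have "\<dots> = (\<integral>\<^sup>+ t. (\<integral>\<^sup>+ xs. ennreal (Q \<sigma> n t y xs) * ennreal (normal_density t \<sigma> x) \<partial>PiM {1..<n} (\<lambda>_. lborel)) \<partial>lborel)"
    using Suc.hyps by (simp add: Q_step Q_nonneg ennreal_mult)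
  also have "\<dots> = (\<integral>\<^sup>+ t. ennreal (normal_density y (sqrt (real n) * \<sigma>) t) * ennreal (normal_density t \<sigma> x) \<partial>lborel)"
  proof (rule nn_integral_cong)
    fix t :: real
    have "(\<lambda>xs. ennreal (Q \<sigma> n t y xs)) \<in> borel_measurable (PiM {1..<n} (\<lambda>_::nat. lborel::real measure))"
      by (rule measurable_compose[OF Q_meas measurable_ennreal])
    then show "(\<integral>\<^sup>+ xs. ennreal (Q \<sigma> n t y xs) * ennreal (normal_density t \<sigma> x) \<partial>PiM {1..<n} (\<lambda>_. lborel))
       = ennreal (normal_density y (sqrt (real n) * \<sigma>) t) * ennreal (normal_density t \<sigma> x)"
      using Suc.IH[of t] by (subst nn_integral_multc) auto
  qed
  also have "\<dots> = (\<integral>\<^sup>+ t. ennreal (normal_density y (sqrt (real n) * \<sigma>) t * normal_density t \<sigma> x) \<partial>lborel)"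
    by (simp add: ennreal_mult)
  also have "\<dots> = ennreal (normal_density y (sqrt (\<sigma>\<^sup>2 + (sqrt (real n) * \<sigma>)\<^sup>2)) x)"
    using Suc.hyps assms(1) by (intro conv_nd) auto
  also have "sqrt (\<sigma>\<^sup>2 + (sqrt (real n) * \<sigma>)\<^sup>2) = sqrt (real (Suc n)) * \<sigma>"
  proof -
    have "\<sigma>\<^sup>2 + (sqrt (real n) * \<sigma>)\<^sup>2 = (1 + real n) * \<sigma>\<^sup>2"
      by (simp add: power_mult_distrib algebra_simps)
    then show ?thesis using assms(1) by (simp add: real_sqrt_mult)
  qed
  finally show ?case .
qed


lemma F_meas:
  "(\<lambda>xs. \<Prod>k\<in>{1..n}. kern \<sigma> (xxf n x y xs k) (xxf n x y xs (k - 1)) * wlin a b (xxf n x y xs k) / wlin a b (xxf n x y xs (k - 1)))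
     \<in> borel_measurable (PiM {1..<n} (\<lambda>_. lborel))"
proof (rule borel_measurable_prod)
  fix k assume k: "k \<in> {1..n}"
  note m1 = xxf_meas[of k n x y] and m2 = xxf_meas[of "k-1" n x y]
  have [measurable]: "(\<lambda>xs. xxf n x y xs k) \<in> borel_measurable (PiM {1..<n} (\<lambda>_. lborel))"
     "(\<lambda>xs. xxf n x y xs (k-1)) \<in> borel_measurable (PiM {1..<n} (\<lambda>_. lborel))"
    using m1 m2 k by auto
  show "(\<lambda>xs. kern \<sigma> (xxf n x y xs k) (xxf n x y xs (k - 1)) * wlin a b (xxf n x y xs k) / wlin a b (xxf n x y xs (k - 1))) \<in> borel_measurable (PiM {1..<n} (\<lambda>_. lborel))"
    unfolding kern_def normal_density_def wlin_def by measurable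
qed

theorem theorem1:
  fixes n :: nat and \<sigma> a b x y :: real
  assumes "n \<ge> 1" and "\<sigma> > 0"
    and "x \<in> dom_I a b" and "y \<in> dom_I a b"
  shows "pn n x y \<sigma> a b = p1 x y (sqrt (real n) * \<sigma>) a b"
proof -
  let ?M = "PiM {1..<n} (\<lambda>_::nat. lborel::real measure)"
  let ?w = "wlin a b"
  have wx: "?w x > 0" and wy: "?w y > 0" using assms(3,4) unfolding dom_I_def by auto
  have pn': "pn n x y \<sigma> a b = (\<integral>xs. (\<Prod>k\<in>{1..n}. kern \<sigma> (xxf n x y xs k) (xxf n x y xs (k - 1)) * ?w (xxf n x y xs k) / ?w (xxf n x y xs (k - 1))) \<partial>?M)"
    unfolding pn_def xxf_def Let_def p1_eq[OF assms(2)] by simp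
  have AE1: "AE xs in ?M. \<forall>j\<in>{1..<n}. ?w (xs j) \<noteq> 0"
  proof (rule eventually_ball_finite)
    show "finite {1..<n}" by simp
    show "\<forall>j\<in>{1..<n}. AE xs in ?M. ?w (xs j) \<noteq> 0"
    proof
      fix j assume j: "j \<in> {1..<n}"
      show "AE xs in ?M. ?w (xs j) \<noteq> 0"
      proof (cases "a = 0")
        case True then show ?thesis using wy by (simp add: wlin_def)
      next
        case False
        have "AE xs in ?M. xs j \<noteq> - b / a" by (rule AE_coord) (use j in auto)
        then show ?thesis
        proof eventually_elim
          case (elim xs)
          show ?case
          proof
            assume "?w (xs j) = 0"
            then have "xs j = - b / a" using False unfolding wlin_def by (simp add: field_simps)
            with elim show False by simp
          qed
        qed
      qed
    qed
  qed
  have AE2: "AE xs in ?M. (\<Prod>k\<in>{1..n}. kern \<sigma> (xxf n x y xs k) (xxf n x y xs (k - 1)) * ?w (xxf n x y xs k) / ?w (xxf n x y xs (k - 1)))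
       = Q \<sigma> n x y xs * (?w x / ?w y)"
    using AE1
  proof eventually_elim
    case (elim xs)
    define f where "f j = ?w (xxf n x y xs j)" for j
    have fnz: "f j \<noteq> 0" if "j \<le> n" for j
      using that elim wx wy assms(1) unfolding f_def xxf_def by auto
    have "(\<Prod>k\<in>{1..n}. kern \<sigma> (xxf n x y xs k) (xxf n x y xs (k - 1)) * ?w (xxf n x y xs k) / ?w (xxf n x y xs (k - 1)))
        = (\<Prod>k\<in>{1..n}. kern \<sigma> (xxf n x y xs k) (xxf n x y xs (k - 1)) * (f k / f (k - 1)))"
      unfolding f_def by simp
    also have "\<dots> = Q \<sigma> n x y xs * (\<Prod>k\<in>{1..n}. f k / f (k - 1))"
      unfolding Q_def by (rule prod.distrib)
    also have "(\<Prod>k\<in>{1..n}. f k / f (k - 1)) = f n / f 0"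
      by (rule prod_telescope) (use fnz in auto)
    also have "f n / f 0 = ?w x / ?w y"
      unfolding f_def xxf_def using assms(1) by auto
    finally show ?case .
  qed
  have "pn n x y \<sigma> a b = (\<integral>xs. Q \<sigma> n x y xs * (?w x / ?w y) \<partial>?M)"
    unfolding pn'
    by (rule integral_cong_AE[OF F_meas _ AE2])
       (intro borel_measurable_times Q_meas borel_measurable_const)
  also have "\<dots> = (\<integral>xs. Q \<sigma> n x y xs \<partial>?M) * (?w x / ?w y)"
    by (rule integral_mult_left_zero)
  also have "(\<integral>xs. Q \<sigma> n x y xs \<partial>?M) = normal_density y (sqrt (real n) * \<sigma>) x"
    using Q_meas[of \<sigma> n x y] Q_nn[OF assms(2,1), of x y]
    by (subst integral_eq_nn_integral) (auto simp: Q_nonneg)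
  also have "normal_density y (sqrt (real n) * \<sigma>) x * (?w x / ?w y) = p1 x y (sqrt (real n) * \<sigma>) a b"
    using assms(1,2) by (subst p1_eq) (auto simp: kern_def)
  finally show ?thesis .
qed

end
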